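(* Let $0\to\mathfrak h\xrightarrow{i}\hat{\mathfrak g}\xrightarrow{p}\mathfrak g\to0$ be an abelian extension of a difference Lie algebra $(\mathfrak g,D)$ by $(\mathfrak h,K)$, with $\hat{\mathfrak g}$ carrying the difference operator $\hat D$, and identify $\mathfrak h$ with $i(\mathfrak h)\subset\hat{\mathfrak g}$. For a section $s$ (a linear map $s:\mathfrak g\to\hat{\mathfrak g}$ with $p\circ s=\mathrm{Id}$), define $\varrho:\mathfrak g\to\mathfrak{gl}(\mathfrak h)$ by $\varrho(x)u=[s(x),u]_{\hat{\mathfrak g}}$. Then $\varrho$ is a representation of $(\mathfrak g,D)$ on $\mathfrak h$ with respect to $K$, and it does not depend on the choice of section $s$.
   Context: A difference Lie algebra $(\mathfrak g,D)$: a Lie algebra with linear $D$ such that $D[x,y]=[x,D(y)]-[y,D(x)]+[D(x),D(y)]$; a homomorphism of difference Lie algebras is a Lie algebra homomorphism intertwining the operators. An extension of $(\mathfrak g,D)$ by a difference Lie algebra $(\mathfrak h,K)$ is a short exact sequence of Lie algebras $0\to\mathfrak h\xrightarrow{i}\hat{\mathfrak g}\xrightarrow{p}\mathfrak g\to0$ where $(\hat{\mathfrak g},\hat D)$ is a difference Lie algebra and $\hat D\circ i=i\circ K$, $p\circ\hat D=D\circ p$; it is abelian if $\mathfrak h$ is an abelian Lie algebra. A representation of $(\mathfrak g,D)$ on $V$ with respect to $K:V\to V$ is a Lie algebra representation $\varrho$ with $K(\varrho(x)u)=\varrho(D(x))u+\varrho(x)K(u)+\varrho(D(x))K(u)$.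 *)

theory Defs
  imports Complex_Main
begin

definition lie_algebra :: "('k::field \<Rightarrow> 'a \<Rightarrow> 'a::ab_group_add) \<Rightarrow> ('a \<Rightarrow> 'a \<Rightarrow> 'a) \<Rightarrow> bool" where
  "lie_algebra sc br \<longleftrightarrow>
     vector_space sc \<and>
     (\<forall>y. Vector_Spaces.linear sc sc (\<lambda>x. br x y)) \<and>
     (\<forall>x. Vector_Spaces.linear sc sc (\<lambda>y. br x y)) \<and>
     (\<forall>x. br x x = 0) \<and>
     (\<forall>x y z. br x (br y z) + br y (br z x) + br z (br x y) = 0)"

definition difference_lie_algebra ::
  "('k::field \<Rightarrow> 'a \<Rightarrow> 'a::ab_group_add) \<Rightarrow> ('a \<Rightarrow> 'a \<Rightarrow> 'a) \<Rightarrow> ('a \<Rightarrow> 'a) \<Rightarrow> bool" where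
  "difference_lie_algebra sc br D \<longleftrightarrow>
     lie_algebra sc br \<and> Vector_Spaces.linear sc sc D \<and>
     (\<forall>x y. D (br x y) = br x (D y) - br y (D x) + br (D x) (D y))"

definition lie_hom ::
  "('k::field \<Rightarrow> 'a \<Rightarrow> 'a::ab_group_add) \<Rightarrow> ('a \<Rightarrow> 'a \<Rightarrow> 'a) \<Rightarrow>
   ('k \<Rightarrow> 'b \<Rightarrow> 'b::ab_group_add) \<Rightarrow> ('b \<Rightarrow> 'b \<Rightarrow> 'b) \<Rightarrow> ('a \<Rightarrow> 'b) \<Rightarrow> bool" where
  "lie_hom sa bra sb brb f \<longleftrightarrow>
     Vector_Spaces.linear sa sb f \<and> (\<forall>x y. f (bra x y) = brb (f x) (f y))"

definition abelian_extension ::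
  "('k::field \<Rightarrow> 'g \<Rightarrow> 'g::ab_group_add) \<Rightarrow> ('g \<Rightarrow> 'g \<Rightarrow> 'g) \<Rightarrow> ('g \<Rightarrow> 'g) \<Rightarrow>
   ('k \<Rightarrow> 'h \<Rightarrow> 'h::ab_group_add) \<Rightarrow> ('h \<Rightarrow> 'h \<Rightarrow> 'h) \<Rightarrow> ('h \<Rightarrow> 'h) \<Rightarrow>
   ('k \<Rightarrow> 'e \<Rightarrow> 'e::ab_group_add) \<Rightarrow> ('e \<Rightarrow> 'e \<Rightarrow> 'e) \<Rightarrow> ('e \<Rightarrow> 'e) \<Rightarrow>
   ('h \<Rightarrow> 'e) \<Rightarrow> ('e \<Rightarrow> 'g) \<Rightarrow> bool" where
  "abelian_extension sg brg D sh brh K se bre hD i p \<longleftrightarrow>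
     difference_lie_algebra sg brg D \<and>
     difference_lie_algebra sh brh K \<and>
     difference_lie_algebra se bre hD \<and>
     lie_hom sh brh se bre i \<and> lie_hom se bre sg brg p \<and>
     inj i \<and> surj p \<and> range i = {x. p x = 0} \<and>
     (\<forall>u v. brh u v = 0) \<and>
     hD \<circ> i = i \<circ> K \<and> p \<circ> hD = D \<circ> p"

definition lie_representation ::
  "('k::field \<Rightarrow> 'g \<Rightarrow> 'g::ab_group_add) \<Rightarrow> ('g \<Rightarrow> 'g \<Rightarrow> 'g) \<Rightarrow>
   ('k \<Rightarrow> 'v \<Rightarrow> 'v::ab_group_add) \<Rightarrow> ('g \<Rightarrow> 'v \<Rightarrow> 'v) \<Rightarrow> bool" where
  "lie_representation sg brg sv \<rho> \<longleftrightarrow>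
     vector_space sv \<and>
     (\<forall>v. Vector_Spaces.linear sg sv (\<lambda>x. \<rho> x v)) \<and>
     (\<forall>x. Vector_Spaces.linear sv sv (\<rho> x)) \<and>
     (\<forall>x y v. \<rho> (brg x y) v = \<rho> x (\<rho> y v) - \<rho> y (\<rho> x v))"

definition difference_representation ::
  "('k::field \<Rightarrow> 'g \<Rightarrow> 'g::ab_group_add) \<Rightarrow> ('g \<Rightarrow> 'g \<Rightarrow> 'g) \<Rightarrow> ('g \<Rightarrow> 'g) \<Rightarrow>
   ('k \<Rightarrow> 'v \<Rightarrow> 'v::ab_group_add) \<Rightarrow> ('v \<Rightarrow> 'v) \<Rightarrow> ('g \<Rightarrow> 'v \<Rightarrow> 'v) \<Rightarrow> bool" where
  "difference_representation sg brg D sv K \<rho> \<longleftrightarrow>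
     lie_representation sg brg sv \<rho> \<and> Vector_Spaces.linear sv sv K \<and>
     (\<forall>x u. K (\<rho> x u) = \<rho> (D x) u + \<rho> x (K u) + \<rho> (D x) (K u))"

definition lin_section :: "('k::field \<Rightarrow> 'g \<Rightarrow> 'g::ab_group_add) \<Rightarrow> ('k \<Rightarrow> 'e \<Rightarrow> 'e::ab_group_add) \<Rightarrow>
   ('e \<Rightarrow> 'g) \<Rightarrow> ('g \<Rightarrow> 'e) \<Rightarrow> bool" where
  "lin_section sg se p s \<longleftrightarrow> Vector_Spaces.linear sg se s \<and> p \<circ> s = id"

text \<open>rho_s(x)u = [s(x), u] with h identified with i(h): the unique v with i v = [s x, i u].\<close>

definition induced_rep :: "('e \<Rightarrow> 'e \<Rightarrow> 'e) \<Rightarrow> ('h \<Rightarrow> 'e) \<Rightarrow> ('g \<Rightarrow> 'e) \<Rightarrow> 'g \<Rightarrow> 'h \<Rightarrow> 'h" where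
  "induced_rep bre i s x u = the_inv i (bre (s x) (i u))"

end

theory Submission
  imports Defs
begin

lemma add_diff_hom:
  fixes f :: "'a::ab_group_add \<Rightarrow> 'b::ab_group_add"
  assumes "\<And>x y. f (x + y) = f x + f y"
  shows "f (x - y) = f x - f y" and "f 0 = 0"
proof -
  have "f (x - y) + f y = f x" using assms[of "x - y" y] by simp
  then show "f (x - y) = f x - f y" by (simp add: algebra_simps)
  have "f 0 + f 0 = f 0" using assms[of 0 0] by simp
  then show "f 0 = 0" by simp
qed

theorem proposition4p14:
  fixes sg :: "'k::field \<Rightarrow> 'g \<Rightarrow> 'g::ab_group_add" and brg :: "'g \<Rightarrow> 'g \<Rightarrow> 'g" and D :: "'g \<Rightarrow> 'g"
    and sh :: "'k \<Rightarrow> 'h \<Rightarrow> 'h::ab_group_add" and brh :: "'h \<Rightarrow> 'h \<Rightarrow> 'h" and K :: "'h \<Rightarrow> 'h"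
    and se :: "'k \<Rightarrow> 'e \<Rightarrow> 'e::ab_group_add" and bre :: "'e \<Rightarrow> 'e \<Rightarrow> 'e" and hD :: "'e \<Rightarrow> 'e"
    and i :: "'h \<Rightarrow> 'e" and p :: "'e \<Rightarrow> 'g" and s :: "'g \<Rightarrow> 'e"
  assumes "abelian_extension sg brg D sh brh K se bre hD i p"
    and "lin_section sg se p s"
  shows "(\<forall>x u. bre (s x) (i u) \<in> range i)
    \<and> difference_representation sg brg D sh K (induced_rep bre i s)
    \<and> (\<forall>s'. lin_section sg se p s' \<longrightarrow> induced_rep bre i s' = induced_rep bre i s)"
proof -
  obtain LG LH LE Hi Hp where LG: "difference_lie_algebra sg brg D"
    and LH: "difference_lie_algebra sh brh K" and LE: "difference_lie_algebra se bre hD"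
    and Hi: "lie_hom sh brh se bre i" and Hp: "lie_hom se bre sg brg p"
    and i_inj: "inj i" and rng: "range i = {x. p x = 0}" and ab: "\<forall>u v. brh u v = 0"
    and c1: "hD \<circ> i = i \<circ> K" and c2: "p \<circ> hD = D \<circ> p"
    using assms(1) unfolding abelian_extension_def by blast
  have LGa: "lie_algebra sg brg" using LG unfolding difference_lie_algebra_def by blast
  have LHa: "lie_algebra sh brh" and Klin: "Vector_Spaces.linear sh sh K"
    using LH unfolding difference_lie_algebra_def by blast+
  have LEa: "lie_algebra se bre"
   and hDbr: "\<And>a b. hD (bre a b) = bre a (hD b) - bre b (hD a) + bre (hD a) (hD b)"
    using LE unfolding difference_lie_algebra_def by blast+
  have vg: "vector_space sg" using LGa unfolding lie_algebra_def by blast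
  have vh: "vector_space sh" using LHa unfolding lie_algebra_def by blast
  have linl: "Vector_Spaces.linear se se (\<lambda>x. bre x c)" for c using LEa unfolding lie_algebra_def by blast
  have linr: "Vector_Spaces.linear se se (\<lambda>x. bre c x)" for c using LEa unfolding lie_algebra_def by blast
  have alt: "bre a a = 0" for a using LEa unfolding lie_algebra_def by blast
  have jac: "bre a (bre b c) + bre b (bre c a) + bre c (bre a b) = 0" for a b c
    using LEa unfolding lie_algebra_def by blast
  have bl_add: "bre (a + b) c = bre a c + bre b c" for a b c
    using linl[of c] unfolding Vector_Spaces.linear_iff by blast
  have bl_sc: "bre (se r a) c = se r (bre a c)" for r a c
    using linl[of c] unfolding Vector_Spaces.linear_iff by blast
  have br_add: "bre c (a + b) = bre c a + bre c b" for a b c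
    using linr[of c] unfolding Vector_Spaces.linear_iff by blast
  have br_sc: "bre c (se r a) = se r (bre c a)" for r a c
    using linr[of c] unfolding Vector_Spaces.linear_iff by blast
  have bl_diff: "bre (a - b) c = bre a c - bre b c" for a b c
    by (rule add_diff_hom(1)[where f="\<lambda>a. bre a c"]) (rule bl_add)
  have br_diff: "bre c (a - b) = bre c a - bre c b" for a b c
    by (rule add_diff_hom(1)[where f="\<lambda>a. bre c a"]) (rule br_add)
  have br_neg: "bre c (- a) = - bre c a" for c a
    using br_diff[of c 0 a] add_diff_hom(2)[where f="bre c", OF br_add] by simp
  have anti: "bre a b = - bre b a" for a b
  proof -
    have "bre (a + b) (a + b) = 0" by (rule alt)
    moreover have "bre (a + b) (a + b) = bre a a + bre a b + (bre b a + bre b b)"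
      by (simp add: bl_add br_add add.assoc)
    ultimately have "bre a b + bre b a = 0" by (simp add: alt)
    then show ?thesis by (simp add: eq_neg_iff_add_eq_0)
  qed
  have i_add: "i (a + b) = i a + i b" for a b using Hi unfolding lie_hom_def Vector_Spaces.linear_iff by blast
  have i_sc: "i (sh r a) = se r (i a)" for r a using Hi unfolding lie_hom_def Vector_Spaces.linear_iff by blast
  have i_brk: "bre (i u) (i v) = 0" for u v
  proof -
    have "bre (i u) (i v) = i (brh u v)" using Hi unfolding lie_hom_def by simp
    also have "brh u v = 0" using ab by blast
    finally show ?thesis using add_diff_hom(2)[where f=i, OF i_add] by simp
  qed
  have p_add: "p (a + b) = p a + p b" for a b using Hp unfolding lie_hom_def Vector_Spaces.linear_iff by blast
  have p_diff: "p (a - b) = p a - p b" for a b by (rule add_diff_hom(1)[where f=p]) (rule p_add)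
  have p_br: "p (bre a b) = brg (p a) (p b)" for a b using Hp unfolding lie_hom_def by blast
  have pi: "p (i u) = 0" for u using rng by auto
  have inrng: "p a = 0 \<Longrightarrow> a \<in> range i" for a using rng by auto
  have brg0: "brg x 0 = 0" for x
  proof -
    have "Vector_Spaces.linear sg sg (\<lambda>y. brg x y)" using LGa unfolding lie_algebra_def by blast
    then show ?thesis unfolding Vector_Spaces.linear_iff using add_diff_hom(2)[where f="brg x"] by blast
  qed
  have s_add: "s (a + b) = s a + s b" for a b using assms(2) unfolding lin_section_def Vector_Spaces.linear_iff by blast
  have s_sc: "s (sg r a) = se r (s a)" for r a using assms(2) unfolding lin_section_def Vector_Spaces.linear_iff by blast
  have ps: "p (s x) = x" for x using assms(2) unfolding lin_section_def by (metis comp_apply id_apply)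
  have hDi: "hD (i u) = i (K u)" for u using c1 by (metis comp_apply)
  have phD: "p (hD a) = D (p a)" for a using c2 by (metis comp_apply)
  have key: "p a = p b \<Longrightarrow> bre a (i u) = bre b (i u)" for a b u
  proof -
    assume "p a = p b"
    then have "p (a - b) = 0" by (simp add: p_diff)
    then obtain w where "a - b = i w" using inrng by blast
    then have "bre (a - b) (i u) = 0" by (simp add: i_brk)
    then show ?thesis by (simp add: bl_diff)
  qed
  have inr: "bre (s x) (i u) \<in> range i" for x u
    by (rule inrng) (simp add: p_br pi brg0)
  define \<rho> where "\<rho> = induced_rep bre i s"
  have irho: "i (\<rho> x u) = bre (s x) (i u)" for x u
  proof -
    obtain w where w: "bre (s x) (i u) = i w" using inr[of x u] by blast
    have "\<rho> x u = w" unfolding \<rho>_def induced_rep_def w using i_inj by (rule the_inv_f_f)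
    then show ?thesis using w by simp
  qed
  have ieq: "i a = i b \<Longrightarrow> a = b" for a b using i_inj by (meson injD)
  have lin1: "Vector_Spaces.linear sg sh (\<lambda>x. \<rho> x v)" for v
    unfolding Vector_Spaces.linear_iff using vg vh
    by (auto intro!: ieq simp: i_add i_sc irho s_add s_sc bl_add bl_sc)
  have lin2: "Vector_Spaces.linear sh sh (\<rho> x)" for x
    unfolding Vector_Spaces.linear_iff using vh
    by (auto intro!: ieq simp: i_add i_sc irho br_add br_sc)
  have brk: "\<rho> (brg x y) v = \<rho> x (\<rho> y v) - \<rho> y (\<rho> x v)" for x y v
  proof (rule ieq)
    have i_diff: "i (a - b) = i a - i b" for a b by (rule add_diff_hom(1)[where f=i]) (rule i_add)
    have "i (\<rho> (brg x y) v) = bre (s (brg x y)) (i v)" by (rule irho)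
    also have "\<dots> = bre (bre (s x) (s y)) (i v)" by (rule key) (simp add: p_br ps)
    also have "\<dots> = bre (s x) (bre (s y) (i v)) - bre (s y) (bre (s x) (i v))"
    proof -
      have j: "bre (s x) (bre (s y) (i v)) + bre (s y) (bre (i v) (s x)) + bre (i v) (bre (s x) (s y)) = 0"
        by (rule jac)
      have "bre (s y) (bre (i v) (s x)) = - bre (s y) (bre (s x) (i v))"
        by (simp add: anti[of "i v" "s x"] br_neg)
      moreover have "bre (i v) (bre (s x) (s y)) = - bre (bre (s x) (s y)) (i v)" by (rule anti)
      ultimately show ?thesis using j by (simp add: algebra_simps)
    qed
    also have "\<dots> = i (\<rho> x (\<rho> y v) - \<rho> y (\<rho> x v))" by (simp add: i_diff irho)
    finally show "i (\<rho> (brg x y) v) = i (\<rho> x (\<rho> y v) - \<rho> y (\<rho> x v))" .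
  qed
  have Kcond: "K (\<rho> x u) = \<rho> (D x) u + \<rho> x (K u) + \<rho> (D x) (K u)" for x u
  proof (rule ieq)
    have "i (K (\<rho> x u)) = hD (i (\<rho> x u))" by (simp add: hDi)
    also have "\<dots> = bre (s x) (i (K u)) - bre (i u) (hD (s x)) + bre (hD (s x)) (i (K u))"
      by (simp add: irho hDbr hDi)
    also have "bre (i u) (hD (s x)) = - bre (hD (s x)) (i u)" by (rule anti)
    also have "bre (hD (s x)) (i u) = bre (s (D x)) (i u)" by (rule key) (simp add: phD ps)
    also have "bre (hD (s x)) (i (K u)) = bre (s (D x)) (i (K u))" by (rule key) (simp add: phD ps)
    finally show "i (K (\<rho> x u)) = i (\<rho> (D x) u + \<rho> x (K u) + \<rho> (D x) (K u))"
      by (simp add: i_add irho algebra_simps)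
  qed
  have indep: "induced_rep bre i s' = \<rho>" if "lin_section sg se p s'" for s'
  proof (intro ext)
    fix x u
    have "p (s' x) = x" using that unfolding lin_section_def by (metis comp_apply id_apply)
    then have "bre (s' x) (i u) = bre (s x) (i u)" by (intro key) (simp add: ps)
    then show "induced_rep bre i s' x u = \<rho> x u" unfolding \<rho>_def induced_rep_def by simp
  qed
  show ?thesis
    unfolding difference_representation_def lie_representation_def \<rho>_def[symmetric]
    using inr vh lin1 lin2 brk Klin Kcond indep by blast
qed

end
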